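(* For every integer $n\ge 1$, $$\sum_{i=1}^{2^{n}}e(i)=\frac{1}{36}\Bigl((6n-7)2^{n+2}+18n+27+(-1)^{n}\Bigr).$$
   Context: The Stern polynomials $B_n(t)\in\mathbb{Z}[t]$, $n\ge 0$, are defined by $B_0(t)=0$, $B_1(t)=1$, $B_{2n}(t)=tB_n(t)$ and $B_{2n+1}(t)=B_n(t)+B_{n+1}(t)$ for $n\ge 1$. For $n\ge 1$, $e(n)=\deg_t B_n(t)$. *)

theory Defs
  imports "HOL-Computational_Algebra.Polynomial"
begin

function stern_poly :: "nat \<Rightarrow> int poly" where
  "stern_poly n =
     (if n = 0 then 0
      else if n = 1 then 1
      else if even n then monom 1 1 * stern_poly (n div 2)
      else stern_poly (n div 2) + stern_poly (n div 2 + 1))"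
  by pat_completeness auto
termination
  by (relation "measure id") (auto elim!: oddE)

declare stern_poly.simps [simp del]

definition e :: "nat \<Rightarrow> nat" where
  "e n = degree (stern_poly n)"

end

theory Submission
  imports Defs
begin

lemma sp_nonneg: "coeff (stern_poly n) i \<ge> 0"
proof (induction n arbitrary: i rule: less_induct)
  case (less n)
  show ?case
  proof (cases "n = 0 \<or> n = 1")
    case True
    have "stern_poly 0 = 0" "stern_poly 1 = 1" by (simp_all add: stern_poly.simps)
    then show ?thesis using True by (auto simp: coeff_1)
  next
    case False
    show ?thesis
    proof (cases "even n")
      case True
      have "coeff (monom 1 1 * stern_poly (n div 2)) i \<ge> 0"
        using less[of "n div 2"] False
        by (cases i) (auto simp: coeff_monom_mult)
      then show ?thesis using False True by (subst stern_poly.simps) simp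
    next
      case odd: False
      have lt: "n div 2 + 1 < n" using False odd by presburger
      have "coeff (stern_poly (n div 2) + stern_poly (n div 2 + 1)) i \<ge> 0"
        using lt less[of "n div 2"] less[of "n div 2 + 1"] False odd by auto
      then show ?thesis using False odd by (subst stern_poly.simps) simp
    qed
  qed
qed

lemma sp_nz: "n \<ge> 1 \<Longrightarrow> stern_poly n \<noteq> 0"
proof (induction n rule: less_induct)
  case (less n)
  show ?case
  proof (cases "n = 1")
    case True
    have "stern_poly 1 = 1" by (simp add: stern_poly.simps)
    then show ?thesis using True by simp
  next
    case False
    show ?thesis
    proof (cases "even n")
      case True
      have "monom (1::int) 1 * stern_poly (n div 2) \<noteq> 0"
        using less.IH[of "n div 2"] False less.prems True by (auto simp: monom_eq_0_iff)
      then show ?thesis using False True less.prems by (subst stern_poly.simps) simp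
    next
      case odd: False
      have nz: "stern_poly (n div 2) \<noteq> 0"
        using less.IH[of "n div 2"] False less.prems odd by auto
      have "coeff (stern_poly (n div 2) + stern_poly (n div 2 + 1)) (degree (stern_poly (n div 2))) > 0"
      proof -
        have "lead_coeff (stern_poly (n div 2)) \<noteq> 0" using nz by simp
        moreover have "lead_coeff (stern_poly (n div 2)) \<ge> 0" by (rule sp_nonneg)
        moreover have "coeff (stern_poly (n div 2 + 1)) (degree (stern_poly (n div 2))) \<ge> 0" by (rule sp_nonneg)
        ultimately show ?thesis by (simp only: coeff_add)
      qed
      hence "stern_poly (n div 2) + stern_poly (n div 2 + 1) \<noteq> 0" by (metis coeff_0 less_irrefl)
      then show ?thesis using False odd less.prems by (subst stern_poly.simps) simp
    qed
  qed
qed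

lemma deg_add_nonneg:
  fixes p q :: "int poly"
  assumes "\<And>i. coeff p i \<ge> 0" "\<And>i. coeff q i \<ge> 0"
  shows "degree (p + q) = max (degree p) (degree q)"
proof (rule antisym)
  show "degree (p + q) \<le> max (degree p) (degree q)" by (rule degree_add_le_max)
  have a: "degree p \<le> degree (p + q)"
  proof (cases "p = 0")
    case False
    have "coeff (p + q) (degree p) > 0"
      using False assms[of "degree p"]
      by (metis add_pos_nonneg coeff_add leading_coeff_0_iff order_le_neq_trans)
    then show ?thesis by (intro le_degree) auto
  qed simp
  have b: "degree q \<le> degree (p + q)"
  proof (cases "q = 0")
    case False
    have "coeff (p + q) (degree q) > 0"
      using False assms[of "degree q"]
      by (metis add_nonneg_pos coeff_add leading_coeff_0_iff order_le_neq_trans)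
    then show ?thesis by (intro le_degree) auto
  qed simp
  show "max (degree p) (degree q) \<le> degree (p + q)" using a b by simp
qed

lemma e_even: "n \<ge> 1 \<Longrightarrow> e (2*n) = e n + 1"
proof -
  assume n: "n \<ge> 1"
  have "stern_poly (2*n) = monom 1 1 * stern_poly n"
    using n by (subst stern_poly.simps) simp
  moreover have "degree (monom (1::int) 1 * stern_poly n) = degree (stern_poly n) + 1"
    using sp_nz[OF n] by (subst degree_mult_eq) (auto simp: degree_monom_eq monom_eq_0_iff)
  ultimately show ?thesis by (simp add: e_def)
qed

lemma e_odd: "n \<ge> 1 \<Longrightarrow> e (2*n+1) = max (e n) (e (n+1))"
proof -
  assume n: "n \<ge> 1"
  have "stern_poly (2*n+1) = stern_poly n + stern_poly (n+1)"
    using n by (subst stern_poly.simps) simp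
  then show ?thesis unfolding e_def using deg_add_nonneg sp_nonneg by simp
qed

lemma e0: "e 0 = 0" by (simp add: e_def stern_poly.simps)
lemma e1: "e 1 = 0" by (simp add: e_def stern_poly.simps)
lemma e1': "e (Suc 0) = 0" using e1 by simp
lemma e2: "e 2 = 1" using e_even[of 1] e1 by simp
lemma e2': "e (Suc (Suc 0)) = 1" using e2 by (simp add: numeral_2_eq_2)
lemma e3: "e 3 = 1" using e_odd[of 1] e1 e2 e2' by simp

lemma e_diff: "n \<ge> 1 \<Longrightarrow> e (n+1) \<le> e n + 1 \<and> e n \<le> e (n+1) + 1"
proof (induction n rule: less_induct)
  case (less n)
  show ?case
  proof (cases "n = 1")
    case True
    then show ?thesis using e1 e2' by simp
  next
    case False
    show ?thesis
    proof (cases "even n")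
      case True
      then obtain k where k: "n = 2*k" by blast
      have k1: "k \<ge> 1" using k less.prems by simp
      have "e (k+1) \<le> e k + 1" using less.IH[of k] k k1 by simp
      then show ?thesis using k e_even[OF k1] e_odd[OF k1] by auto
    next
      case odd: False
      then obtain k where k: "n = 2*k+1" using oddE by blast
      have k1: "k \<ge> 1" using k False by simp
      have "e k \<le> e (k+1) + 1" using less.IH[of k] k k1 by simp
      moreover have "e (2*(k+1)) = e (k+1) + 1" using e_even[of "k+1"] by simp
      ultimately show ?thesis using k e_odd[OF k1]
        by (auto simp: algebra_simps)
    qed
  qed
qed

lemma e_4_1: "n \<ge> 1 \<Longrightarrow> e (4*n+1) = e n + 1"
proof -
  assume n: "n \<ge> 1"
  have "e (4*n+1) = max (e (2*n)) (e (2*n+1))"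
    using e_odd[of "2*n"] n by (simp add: algebra_simps)
  then show ?thesis using e_even[OF n] e_odd[OF n] e_diff[OF n] by auto
qed

lemma e_4_1': "0 < n \<Longrightarrow> e (Suc (4*n)) = Suc (e n)"
  using e_4_1[of n] by simp

lemma e_4_3: "e (4*n+3) = e (n+1) + 1"
proof (cases "n = 0")
  case True
  then show ?thesis using e2 e3 e1' by simp
next
  case False
  hence n: "n \<ge> 1" by simp
  have eq: "4*n+3 = 2*(2*n+1)+1" "2*n+2 = (2*n+1)+1" by simp_all
  have "e (4*n+3) = max (e (2*n+1)) (e (2*n+2))"
    unfolding eq by (rule e_odd) simp
  moreover have "e (2*n+2) = e (n+1) + 1" using e_even[of "n+1"] by simp
  ultimately show ?thesis using e_odd[OF n] e_diff[OF n] by auto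
qed

lemma e_pow: "e (2^k) = k"
  by (induction k) (auto simp: e1' e_even)

lemma sum_split2: "(\<Sum>i<2*m. f i) = (\<Sum>i<m. f (2*i) + f (2*i+1::nat))"
  by (induction m) (auto simp: algebra_simps)

definition G :: "nat \<Rightarrow> nat" where "G m = (\<Sum>i<m. e (i+1))"

lemma G4: "m \<ge> 1 \<Longrightarrow> G (4*m) + e m + 1 = G (2*m) + 2 * G m + 4*m"
proof -
  assume m: "m \<ge> 1"
  have A: "G (2*m) = (\<Sum>i<m. e (2*i+1) + e (2*i+2))"
    unfolding G_def by (subst sum_split2) (simp add: algebra_simps)
  have "G (4*m) = (\<Sum>i<2*m. e (2*i+1) + e (2*i+2))"
    unfolding G_def using sum_split2[of "\<lambda>i. e (i+1)" "2*m"]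
    by (simp add: algebra_simps)
  also have "\<dots> = (\<Sum>i<m. e (4*i+1) + e (4*i+2) + e (4*i+3) + e (4*i+4))"
  proof (subst sum_split2, rule sum.cong[OF refl])
    fix i
    have "2*(2*i)+1 = 4*(i::nat)+1" "2*(2*i)+2 = 4*i+2" "2*(2*i+1)+1 = 4*i+3" "2*(2*i+1)+2 = 4*i+4"
      by simp_all
    then show "e (2*(2*i)+1) + e (2*(2*i)+2) + (e (2*(2*i+1)+1) + e (2*(2*i+1)+2)) = e (4*i+1) + e (4*i+2) + e (4*i+3) + e (4*i+4)"
      by (simp only:)
  qed
  finally have B: "G (4*m) = (\<Sum>i<m. e (4*i+1) + e (4*i+2) + e (4*i+3) + e (4*i+4))" .
  have C: "(\<Sum>i<m. e (4*i+1)) + 1 = (\<Sum>i<m. e i + 1)"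
  proof -
    have "(\<Sum>i<m. e i + 1) = (\<Sum>i<m. (if i = 0 then 1 else e (4*i+1)))"
      by (rule sum.cong) (auto simp: e0 e_4_1')
    also have "\<dots> = (\<Sum>i<m. e (4*i+1)) + 1"
    proof -
      have "(\<Sum>i<m. (if i = 0 then 1 else e (4*i+1))) = (\<Sum>i<m. e (4*i+1) + (if i = 0 then 1 else 0))"
        by (rule sum.cong) (auto simp: e1 e1')
      also have "\<dots> = (\<Sum>i<m. e (4*i+1)) + 1" using m by (simp add: sum.distrib)
      finally show ?thesis .
    qed
    finally show ?thesis by simp
  qed
  have D: "(\<Sum>i<m. e i) + e m = G m"
    unfolding G_def by (induction m) (auto simp: e0)
  have E: "(\<Sum>i<m. e (4*i+2) + e (4*i+4)) = G (2*m) + 2*m"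
  proof -
    have "(\<Sum>i<m. e (4*i+2) + e (4*i+4)) = (\<Sum>i<m. e (2*i+1) + e (2*i+2) + 2)"
    proof (rule sum.cong)
      fix i
      have "e (2*(2*i+1)) = e (2*i+1) + 1" by (rule e_even) simp
      moreover have "e (2*(2*i+2)) = e (2*i+2) + 1" by (rule e_even) simp
      moreover have "2*(2*i+1) = 4*i+2" "2*(2*i+2) = 4*i+4" by simp_all
      ultimately show "e (4*i+2) + e (4*i+4) = e (2*i+1) + e (2*i+2) + 2"
        by (simp only:)
    qed simp
    then show ?thesis using A unfolding sum.distrib by simp
  qed
  have F: "(\<Sum>i<m. e (4*i+3)) = G m + m"
    unfolding G_def e_4_3 sum.distrib by simp
  have "G (4*m) = (\<Sum>i<m. e (4*i+1)) + (\<Sum>i<m. e (4*i+2) + e (4*i+4)) + (\<Sum>i<m. e (4*i+3))"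
    unfolding B by (simp add: sum.distrib algebra_simps)
  moreover have C': "(\<Sum>i<m. e (4*i+1)) + 1 = (\<Sum>i<m. e i) + m"
    using C unfolding sum.distrib by simp
  ultimately show ?thesis using C' D E F by linarith
qed

definition fcl :: "nat \<Rightarrow> real" where
  "fcl n = ((6 * real n - 7) * 2 ^ (n + 2) + 18 * real n + 27 + (-1) ^ n) / 36"

lemma fcl_rec: "fcl (n+3) = fcl (n+2) + 2*fcl(n+1) + 4*2^(n+1) - real n - 2"
proof -
  have h: "fcl (n+k) = ((6*real n + 6*real k - 7) * (2^(k+2) * 2^n) + 18*real n + 18*real k + 27 + (-1)^k * (-1)^n)/36" for k
    by (simp add: fcl_def power_add algebra_simps)
  have "(-1::real)^(n+1) = - ((-1)^n)" by simp
  have e: "(2::real)^(n+1) = 2 * 2^n" by simp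
  show ?thesis unfolding h e
  proof -
    have g: "((6 * real n + 6 * real k - 7) * (2 ^ (k + 2) * X) + 18 * real n + 18 * real k + 27 + (- 1) ^ k * s) / 36
       = ((6 * real n + 6 * real k - 7) * (2 ^ (k + 2)) * X + 18 * real n + 18 * real k + 27 + (- 1) ^ k * s) / 36" for k X s
      by (simp add: algebra_simps)
    show "((6 * real n + 6 * real 3 - 7) * (2 ^ (3 + 2) * 2 ^ n) + 18 * real n + 18 * real 3 + 27 + (- 1) ^ 3 * (- 1) ^ n) / 36 =
    ((6 * real n + 6 * real 2 - 7) * (2 ^ (2 + 2) * 2 ^ n) + 18 * real n + 18 * real 2 + 27 + (- 1) ^ 2 * (- 1) ^ n) / 36 +
    2 * (((6 * real n + 6 * real 1 - 7) * (2 ^ (1 + 2) * 2 ^ n) + 18 * real n + 18 * real 1 + 27 + (- 1) ^ 1 * (- 1) ^ n) / 36) +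
    4 * (2 * 2 ^ n) - real n - 2"
      by (simp add: field_simps)
  qed
qed
lemma main: "real (G (2^(n+1))) = fcl (n+1) \<and> real (G (2^(n+2))) = fcl (n+2)"
proof (induction n)
  case 0
  have "G 2 = 1" unfolding G_def using e1 e_even[of 1] by (simp add: numeral_2_eq_2)
  moreover have "G 4 = 4" unfolding G_def
    using e1 e2 e3 e_even[of 2] by (simp add: numeral_eq_Suc)
  ultimately show ?case by (simp add: fcl_def)
next
  case (Suc n)
  have r: "G (4 * 2^(n+1)) + e (2^(n+1)) + 1 = G (2 * 2^(n+1)) + 2 * G (2^(n+1)) + 4 * 2^(n+1)"
    by (rule G4) simp
  have p: "(4::nat) * 2^(n+1) = 2^(n+3)" "(2::nat) * 2^(n+1) = 2^(n+2)"
    by (simp_all add: power_add)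
  have "real (G (2^(n+3))) + real (n+1) + 1 = real (G (2^(n+2))) + 2 * real (G (2^(n+1))) + 2^(n+3)"
    using arg_cong[OF r, of real] unfolding p e_pow
    by (simp only: of_nat_add of_nat_mult of_nat_numeral of_nat_1 of_nat_power)
  hence r': "real (G (2^(n+3))) = fcl (n+2) + 2 * fcl (n+1) + 2^(n+3) - real n - 2"
    using Suc.IH by linarith
  have b: "real (G (2^(n+3))) = fcl (n+3)" using r' fcl_rec[of n] by (simp add: power_add)
  have a: "real (G (2^(n+2))) = fcl (n+2)" using Suc.IH by blast
  have "Suc n + 1 = n + 2" "Suc n + 2 = n + 3" by simp_all
  then show ?case using a b by (simp only:)
qed

theorem corollary4p7:
  fixes n :: nat
  assumes "n \<ge> 1"
  shows "(\<Sum>i=1..2^n. real (e i)) =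
    ((6 * real n - 7) * 2 ^ (n + 2) + 18 * real n + 27 + (-1) ^ n) / 36"
proof -
  obtain k where k: "n = k + 1" using assms by (metis add.commute le_Suc_ex)
  have "(\<Sum>i=1..2^n. real (e i)) = real (G (2^n))"
  proof -
    have "(\<Sum>i=1..2^n. real (e i)) = (\<Sum>i<2^n. real (e (i+1)))"
    proof -
      have "(\<Sum>i=1..m. f i) = (\<Sum>i<m. f (i+1))" for m and f :: "nat \<Rightarrow> real"
        by (induction m) (auto simp: atLeastAtMostSuc_conv)
      then show ?thesis by simp
    qed
    then show ?thesis by (simp add: G_def)
  qed
  then show ?thesis using main[of k] k by (simp add: fcl_def)
qed

end
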